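(* Let $n\ge3$ and let $A(z_1,\dots,z_n)=\sum_{i=1}^n[z_i,z_{i+1}]$ on the space of plane $n$-gons. Every level hypersurface $\{A=a\}$ with $a\neq0$ is smooth, and the dual Birkhoff distribution $\mathcal F$ is tangent to these hypersurfaces.
   Context: $[\cdot,\cdot]$ is the determinant of two plane vectors; indices are cyclic. The function $A$ is twice the (signed) area of the polygon. $G_n$ is the set of $n$-gons $(z_1,\dots,z_n)\in(\mathbb R^2)^n$ with $z_i\ne z_{i+1}$ for all $i$. The dual Birkhoff distribution $\mathcal F$ on $G_n$: a tangent vector $W=(w_1,\dots,w_n)$ (velocities of the vertices) lies in $\mathcal F$ iff for each $i$ the induced motion of the line $z_iz_{i+1}$ is an infinitesimal rotation about the midpoint of $z_iz_{i+1}$; equivalently $[w_i+w_{i+1},z_{i+1}-z_i]=0$ for all $i$. *)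

theory Defs
  imports "HOL-Analysis.Analysis"
begin

text \<open>Plane vectors are pairs of reals. A plane n-gon is a function
  z :: nat \<Rightarrow> real \<times> real, of which only the values z 0, ..., z (n-1) matter;
  indices are taken cyclically (mod n).\<close>

definition det2 :: "real \<times> real \<Rightarrow> real \<times> real \<Rightarrow> real" where
  "det2 u v = fst u * snd v - snd u * fst v"

definition polyA :: "nat \<Rightarrow> (nat \<Rightarrow> real \<times> real) \<Rightarrow> real" where
  "polyA n z = (\<Sum>i<n. det2 (z i) (z ((i + 1) mod n)))"

definition in_G :: "nat \<Rightarrow> (nat \<Rightarrow> real \<times> real) \<Rightarrow> bool" where
  "in_G n z \<longleftrightarrow> (\<forall>i<n. z i \<noteq> z ((i + 1) mod n))"

definition dual_birkhoff :: "nat \<Rightarrow> (nat \<Rightarrow> real \<times> real) \<Rightarrow> (nat \<Rightarrow> real \<times> real) \<Rightarrow> bool" where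
  "dual_birkhoff n z w \<longleftrightarrow>
     (\<forall>i<n. det2 (w i + w ((i + 1) mod n)) (z ((i + 1) mod n) - z i) = 0)"

end

theory Submission
  imports Defs
begin

lemma cyc_shift:
  fixes f :: "nat \<Rightarrow> real"
  assumes "n > 0"
  shows "(\<Sum>i<n. f ((i + 1) mod n)) = (\<Sum>i<n. f i)"
proof -
  obtain m where m: "n = Suc m" using assms by (cases n) auto
  have "(\<Sum>i<Suc m. f ((i + 1) mod Suc m)) = (\<Sum>i<m. f ((i + 1) mod Suc m)) + f 0"
    by (simp add: sum.lessThan_Suc)
  also have "(\<Sum>i<m. f ((i + 1) mod Suc m)) = (\<Sum>i<m. f (Suc i))"
    by (rule sum.cong) auto
  also have "\<dots> + f 0 = (\<Sum>i<Suc m. f i)"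
    by (subst sum.lessThan_Suc_shift) simp
  finally show ?thesis using m by simp
qed

lemma deriv_polyA:
  "((\<lambda>t. polyA n (\<lambda>i. z i + t *\<^sub>R w i)) has_real_derivative
     (\<Sum>i<n. det2 (w i) (z ((i + 1) mod n)) + det2 (z i) (w ((i + 1) mod n)))) (at 0)"
  unfolding polyA_def
  apply (rule DERIV_sum)
  apply (simp add: det2_def)
  apply (rule derivative_eq_intros refl | simp)+
  done

theorem lemma2p3:
  fixes n :: nat and a :: real
  assumes "n \<ge> 3" and "a \<noteq> 0"
  shows "(\<forall>z. in_G n z \<and> polyA n z = a \<longrightarrow>
            (\<exists>w D. ((\<lambda>t. polyA n (\<lambda>i. z i + t *\<^sub>R w i)) has_real_derivative D) (at 0) \<and> D \<noteq> 0))
       \<and> (\<forall>z w. in_G n z \<and> polyA n z = a \<and> dual_birkhoff n z w \<longrightarrow>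
            ((\<lambda>t. polyA n (\<lambda>i. z i + t *\<^sub>R w i)) has_real_derivative 0) (at 0))"
proof (intro conjI allI impI)
  fix z assume h: "in_G n z \<and> polyA n z = a"
  have "(\<Sum>i<n. det2 (z i) (z ((i + 1) mod n)) + det2 (z i) (z ((i + 1) mod n))) = 2 * a"
    using h by (simp add: sum_distrib_left[symmetric] polyA_def)
  then show "\<exists>w D. ((\<lambda>t. polyA n (\<lambda>i. z i + t *\<^sub>R w i)) has_real_derivative D) (at 0) \<and> D \<noteq> 0"
    using deriv_polyA[of n z z] assms(2) by (intro exI[of _ z] exI[of _ "2*a"]) auto
next
  fix z w assume h: "in_G n z \<and> polyA n z = a \<and> dual_birkhoff n z w"
  have n0: "n > 0" using assms by simp
  let ?S = "\<lambda>i. det2 (w i) (z ((i + 1) mod n)) + det2 (z i) (w ((i + 1) mod n))"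
  have eq: "\<And>i. i < n \<Longrightarrow> ?S i = det2 (w i) (z i) - det2 (w ((i + 1) mod n)) (z ((i + 1) mod n))"
  proof -
    fix i assume "i < n"
    then have "det2 (w i + w ((i + 1) mod n)) (z ((i + 1) mod n) - z i) = 0"
      using h unfolding dual_birkhoff_def by blast
    then show "?S i = det2 (w i) (z i) - det2 (w ((i + 1) mod n)) (z ((i + 1) mod n))"
      by (simp add: det2_def algebra_simps)
  qed
  have "(\<Sum>i<n. ?S i) = (\<Sum>i<n. det2 (w i) (z i)) - (\<Sum>i<n. det2 (w ((i + 1) mod n)) (z ((i + 1) mod n)))"
    using eq by (simp add: sum_subtractf[symmetric])
  also have "\<dots> = 0"
    using cyc_shift[OF n0, of "\<lambda>j. det2 (w j) (z j)"] by simp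
  finally show "((\<lambda>t. polyA n (\<lambda>i. z i + t *\<^sub>R w i)) has_real_derivative 0) (at 0)"
    using deriv_polyA[of n z w] by simp
qed

end
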